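(* Let $\mathcal H$ be finite-dimensional, $I\subseteq\mathbb R$ an open interval, and for $j=1,\dots,n$ let $\{\rho_{j,\theta}\}_{\theta\in I}$ be differentiable families of positive definite density matrices on $\mathcal H$. Let $\varrho_\theta=\rho_{1,\theta}\otimes\cdots\otimes\rho_{n,\theta}$ on $\mathfrak H=\mathcal H^{\otimes n}$ and let $\Theta$ be a self-adjoint operator on $\mathfrak H$, independent of $\theta$, which is an unbiased estimator: $\operatorname{Tr}(\varrho_\theta\Theta)=\theta$ for all $\theta\in I$. Then $$\operatorname{Var}_\theta(\Theta):=\operatorname{Tr}\bigl(\varrho_\theta(\Theta-\theta)^2\bigr)\ \ge\ \frac{1}{\sum_{j=1}^n\widetilde{\mathbf I}_j(\theta)},$$ where $\widetilde{\mathbf I}_j(\theta)=\operatorname{Tr}(\rho_{j,\theta}\widetilde H_j(\theta)^2)$ and $\widetilde H_j(\theta)=\frac12(\rho_{j,\theta}^{-1}\rho_{j,\theta}'+\rho_{j,\theta}'\rho_{j,\theta}^{-1})$. Moreover $\sum_j\widetilde{\mathbf I}_j(\theta)=\operatorname{Tr}(\varrho_\theta\widetilde{\mathbf H}(\theta)^2)$ with $\widetilde{\mathbf H}=\sum_j I^{\otimes(j-1)}\otimes\widetilde H_j\otimes I^{\otimes(n-j)}$. In particular, for $n=1$, $\operatorname{Var}_\theta(\Theta)\ge1/\widetilde{\mathbf I}(\theta)$, and if all $\rho_{j,\theta}=\rho_\theta$ then $\operatorname{Var}_\theta(\Theta)\ge1/(n\widetilde{\mathbf I}(\theta))$. *)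

theory Defs
  imports "HOL-Analysis.Analysis"
begin

text \<open>Operators on the finite-dimensional space H = C^d are represented as
  matrices  nat => nat => complex  of which only the entries with indices < d matter.
  Operators on the n-fold tensor power H^(tensor n) are represented as matrices indexed
  by multi-indices  i :: nat => nat  ranging over  {..<n} ->E {..<d}.\<close>

type_synonym cmat = "nat \<Rightarrow> nat \<Rightarrow> complex"
type_synonym tmat = "(nat \<Rightarrow> nat) \<Rightarrow> (nat \<Rightarrow> nat) \<Rightarrow> complex"

definition mtrace :: "nat \<Rightarrow> cmat \<Rightarrow> complex" where
  "mtrace d A = (\<Sum>i<d. A i i)"

definition mmult :: "nat \<Rightarrow> cmat \<Rightarrow> cmat \<Rightarrow> cmat" where
  "mmult d A B = (\<lambda>i k. \<Sum>j<d. A i j * B j k)"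

definition mid :: cmat where
  "mid = (\<lambda>i j. if i = j then 1 else 0)"

definition mhermitian :: "nat \<Rightarrow> cmat \<Rightarrow> bool" where
  "mhermitian d A \<longleftrightarrow> (\<forall>i<d. \<forall>j<d. A j i = cnj (A i j))"

definition mposdef :: "nat \<Rightarrow> cmat \<Rightarrow> bool" where
  "mposdef d A \<longleftrightarrow> mhermitian d A \<and>
     (\<forall>x :: nat \<Rightarrow> complex. (\<exists>i<d. x i \<noteq> 0) \<longrightarrow>
        0 < Re (\<Sum>i<d. \<Sum>j<d. cnj (x i) * A i j * x j))"

definition pd_density :: "nat \<Rightarrow> cmat \<Rightarrow> bool" where
  "pd_density d A \<longleftrightarrow> mposdef d A \<and> mtrace d A = 1"

text \<open>matrix inverse (well defined for invertible matrices, e.g. positive definite ones)\<close>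
definition minv :: "nat \<Rightarrow> cmat \<Rightarrow> cmat" where
  "minv d A = (SOME B. (\<forall>i<d. \<forall>k<d. mmult d A B i k = mid i k \<and> mmult d B A i k = mid i k))"

definition mderiv :: "(real \<Rightarrow> cmat) \<Rightarrow> real \<Rightarrow> cmat" where
  "mderiv rho \<theta> = (\<lambda>a b. vector_derivative (\<lambda>t. rho t a b) (at \<theta>))"

definition Htil :: "nat \<Rightarrow> (real \<Rightarrow> cmat) \<Rightarrow> real \<Rightarrow> cmat" where
  "Htil d rho \<theta> = (\<lambda>a b. (1/2) * (mmult d (minv d (rho \<theta>)) (mderiv rho \<theta>) a b
                                   + mmult d (mderiv rho \<theta>) (minv d (rho \<theta>)) a b))"

definition Itil :: "nat \<Rightarrow> (real \<Rightarrow> cmat) \<Rightarrow> real \<Rightarrow> complex" where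
  "Itil d rho \<theta> = mtrace d (mmult d (rho \<theta>) (mmult d (Htil d rho \<theta>) (Htil d rho \<theta>)))"

definition MI :: "nat \<Rightarrow> nat \<Rightarrow> (nat \<Rightarrow> nat) set" where
  "MI d n = ({..<n} \<rightarrow>\<^sub>E {..<d})"

definition ttrace :: "nat \<Rightarrow> nat \<Rightarrow> tmat \<Rightarrow> complex" where
  "ttrace d n A = (\<Sum>i\<in>MI d n. A i i)"

definition tmult :: "nat \<Rightarrow> nat \<Rightarrow> tmat \<Rightarrow> tmat \<Rightarrow> tmat" where
  "tmult d n A B = (\<lambda>i k. \<Sum>j\<in>MI d n. A i j * B j k)"

definition tid :: tmat where
  "tid = (\<lambda>i j. if i = j then 1 else 0)"

definition thermitian :: "nat \<Rightarrow> nat \<Rightarrow> tmat \<Rightarrow> bool" where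
  "thermitian d n A \<longleftrightarrow> (\<forall>i\<in>MI d n. \<forall>j\<in>MI d n. A j i = cnj (A i j))"

definition tensor_prod :: "nat \<Rightarrow> (nat \<Rightarrow> cmat) \<Rightarrow> tmat" where
  "tensor_prod n A = (\<lambda>i j. \<Prod>k<n. A k (i k) (j k))"

definition embed_at :: "nat \<Rightarrow> nat \<Rightarrow> cmat \<Rightarrow> tmat" where
  "embed_at n k A = (\<lambda>i j. A (i k) (j k) * (\<Prod>l\<in>{..<n} - {k}. mid (i l) (j l)))"

definition tvar :: "nat \<Rightarrow> nat \<Rightarrow> tmat \<Rightarrow> tmat \<Rightarrow> real \<Rightarrow> complex" where
  "tvar d n rho Th \<theta> =
     (let D = (\<lambda>i j. Th i j - complex_of_real \<theta> * tid i j)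
      in ttrace d n (tmult d n rho (tmult d n D D)))"

end

theory Submission
  imports Defs "Jordan_Normal_Form.Determinant"
begin


definition gm :: "'a set \<Rightarrow> ('a \<Rightarrow> 'a \<Rightarrow> complex) \<Rightarrow> ('a \<Rightarrow> 'a \<Rightarrow> complex) \<Rightarrow> ('a \<Rightarrow> 'a \<Rightarrow> complex)" where
  "gm S A B = (\<lambda>i k. \<Sum>j\<in>S. A i j * B j k)"
definition gt :: "'a set \<Rightarrow> ('a \<Rightarrow> 'a \<Rightarrow> complex) \<Rightarrow> complex" where
  "gt S A = (\<Sum>i\<in>S. A i i)"
definition ct :: "('a \<Rightarrow> 'a \<Rightarrow> complex) \<Rightarrow> ('a \<Rightarrow> 'a \<Rightarrow> complex)" where
  "ct A = (\<lambda>i k. cnj (A k i))"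
definition eqon :: "'a set \<Rightarrow> ('a \<Rightarrow> 'a \<Rightarrow> complex) \<Rightarrow> ('a \<Rightarrow> 'a \<Rightarrow> complex) \<Rightarrow> bool" where
  "eqon S A B \<longleftrightarrow> (\<forall>i\<in>S. \<forall>k\<in>S. A i k = B i k)"

lemma mmult_gm: "mmult d = gm {..<d}" by (auto simp: mmult_def gm_def fun_eq_iff)
lemma tmult_gm: "tmult d n = gm (MI d n)" by (auto simp: tmult_def gm_def fun_eq_iff)
lemma mtrace_gt: "mtrace d = gt {..<d}" by (auto simp: mtrace_def gt_def fun_eq_iff)
lemma ttrace_gt: "ttrace d n = gt (MI d n)" by (auto simp: ttrace_def gt_def fun_eq_iff)

lemma ct_ct[simp]: "ct (ct A) = A" by (simp add: ct_def)

lemma eqon_refl[simp]: "eqon S A A" by (simp add: eqon_def)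
lemma eqon_sym: "eqon S A B \<Longrightarrow> eqon S B A" by (simp add: eqon_def)
lemma eqon_trans: "eqon S A B \<Longrightarrow> eqon S B C \<Longrightarrow> eqon S A C" by (simp add: eqon_def)

lemma gm_cong: "eqon S A A' \<Longrightarrow> eqon S B B' \<Longrightarrow> eqon S (gm S A B) (gm S A' B')"
  by (simp add: eqon_def gm_def)
lemma gt_cong: "eqon S A A' \<Longrightarrow> gt S A = gt S A'"
  by (simp add: eqon_def gt_def)
lemma ct_cong: "eqon S A A' \<Longrightarrow> eqon S (ct A) (ct A')"
  by (simp add: eqon_def ct_def)

lemma gm_assoc: "gm S (gm S A B) C = gm S A (gm S B C)"
proof -
  have "\<And>i k. (\<Sum>j\<in>S. (\<Sum>m\<in>S. A i m * B m j) * C j k) = (\<Sum>m\<in>S. A i m * (\<Sum>j\<in>S. B m j * C j k))"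
    unfolding sum_distrib_left sum_distrib_right mult.assoc by (rule sum.swap)
  thus ?thesis by (simp add: gm_def fun_eq_iff)
qed

lemma gt_comm: "gt S (gm S A B) = gt S (gm S B A)"
  unfolding gt_def gm_def by (subst sum.swap) (simp add: mult.commute)

lemma ct_gm: "ct (gm S A B) = gm S (ct B) (ct A)"
  by (simp add: ct_def gm_def fun_eq_iff mult.commute)

lemma gm_addL: "gm S (\<lambda>i k. A i k + B i k) C = (\<lambda>i k. gm S A C i k + gm S B C i k)"
  by (simp add: gm_def distrib_right sum.distrib fun_eq_iff)
lemma gm_addR: "gm S C (\<lambda>i k. A i k + B i k) = (\<lambda>i k. gm S C A i k + gm S C B i k)"
  by (simp add: gm_def distrib_left sum.distrib fun_eq_iff)
lemma gm_diffR: "gm S C (\<lambda>i k. A i k - B i k) = (\<lambda>i k. gm S C A i k - gm S C B i k)"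
  by (simp add: gm_def right_diff_distrib sum_subtractf fun_eq_iff)
lemma gm_smultL: "gm S (\<lambda>i k. c * A i k) C = (\<lambda>i k. c * gm S A C i k)"
  by (simp add: gm_def sum_distrib_left mult.assoc fun_eq_iff)
lemma gm_smultR: "gm S C (\<lambda>i k. c * A i k) = (\<lambda>i k. c * gm S C A i k)"
  by (simp add: gm_def sum_distrib_left mult.left_commute fun_eq_iff)
lemma gt_add: "gt S (\<lambda>i k. A i k + B i k) = gt S A + gt S B"
  by (simp add: gt_def sum.distrib)
lemma gt_diff: "gt S (\<lambda>i k. A i k - B i k) = gt S A - gt S B"
  by (simp add: gt_def sum_subtractf)
lemma gt_smult: "gt S (\<lambda>i k. c * A i k) = c * gt S A"
  by (simp add: gt_def sum_distrib_left)
lemma gm_sumR: "gm S C (\<lambda>i k. \<Sum>j\<in>J. F j i k) = (\<lambda>i k. \<Sum>j\<in>J. gm S C (F j) i k)"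
  unfolding gm_def fun_eq_iff sum_distrib_left by (auto intro: sum.swap)
lemma gm_sumL: "gm S (\<lambda>i k. \<Sum>j\<in>J. F j i k) C = (\<lambda>i k. \<Sum>j\<in>J. gm S (F j) C i k)"
  unfolding gm_def fun_eq_iff sum_distrib_right by (auto intro: sum.swap)
lemma gt_sum: "gt S (\<lambda>i k. \<Sum>j\<in>J. F j i k) = (\<Sum>j\<in>J. gt S (F j))"
  unfolding gt_def by (rule sum.swap)

lemma gm_idL: "i \<in> S \<Longrightarrow> finite S \<Longrightarrow> gm S (\<lambda>i j. if i = j then 1 else 0) A i k = A i k"
proof -
  assume a: "i \<in> S" "finite S"
  have "(\<Sum>j\<in>S. (if i = j then 1 else 0) * A j k) = (\<Sum>j\<in>S. if i = j then A j k else 0)" by (rule sum.cong) auto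
  thus ?thesis using a by (simp add: gm_def)
qed
lemma gm_idR: "k \<in> S \<Longrightarrow> finite S \<Longrightarrow> gm S A (\<lambda>i j. if i = j then 1 else 0) i k = A i k"
proof -
  assume a: "k \<in> S" "finite S"
  have "(\<Sum>j\<in>S. A i j * (if j = k then 1 else 0)) = (\<Sum>j\<in>S. if k = j then A i j else 0)" by (rule sum.cong) auto
  thus ?thesis using a by (simp add: gm_def)
qed

definition uu :: "'a set \<Rightarrow> ('a \<Rightarrow> 'a \<Rightarrow> complex) \<Rightarrow> ('a \<Rightarrow> 'a \<Rightarrow> complex) \<Rightarrow> 'a \<times> 'a \<Rightarrow> complex" where
  "uu S Bt A = (\<lambda>(m,q). \<Sum>k\<in>S. cnj (Bt k m) * A k q)"

lemma gram_form:
  assumes P: "eqon S P (\<lambda>i k. \<Sum>m\<in>S. Bt i m * cnj (Bt k m))" and fin: "finite S"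
  shows "gt S (gm S P (gm S A (ct C))) = (\<Sum>p\<in>S\<times>S. uu S Bt A p * cnj (uu S Bt C p))"
proof -
  have "gt S (gm S P (gm S A (ct C))) =
     (\<Sum>i\<in>S. \<Sum>k\<in>S. (\<Sum>m\<in>S. Bt i m * cnj (Bt k m)) * (\<Sum>q\<in>S. A k q * cnj (C i q)))"
    using P by (simp add: gt_def gm_def ct_def eqon_def)
  also have "\<dots> = (\<Sum>i\<in>S. \<Sum>k\<in>S. \<Sum>q\<in>S. \<Sum>m\<in>S. Bt i m * cnj (Bt k m) * (A k q * cnj (C i q)))"
    by (simp add: sum_distrib_left sum_distrib_right)
  also have "\<dots> = (\<Sum>i\<in>S. \<Sum>k\<in>S. \<Sum>m\<in>S. \<Sum>q\<in>S. Bt i m * cnj (Bt k m) * (A k q * cnj (C i q)))"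
    by (rule sum.cong[OF refl], rule sum.cong[OF refl], rule sum.swap)
  also have "\<dots> = (\<Sum>i\<in>S. \<Sum>m\<in>S. \<Sum>k\<in>S. \<Sum>q\<in>S. Bt i m * cnj (Bt k m) * (A k q * cnj (C i q)))"
    by (rule sum.cong[OF refl], rule sum.swap)
  also have "\<dots> = (\<Sum>m\<in>S. \<Sum>i\<in>S. \<Sum>k\<in>S. \<Sum>q\<in>S. Bt i m * cnj (Bt k m) * (A k q * cnj (C i q)))"
    by (rule sum.swap)
  also have "\<dots> = (\<Sum>m\<in>S. \<Sum>i\<in>S. \<Sum>q\<in>S. \<Sum>k\<in>S. Bt i m * cnj (Bt k m) * (A k q * cnj (C i q)))"
    by (rule sum.cong[OF refl], rule sum.cong[OF refl], rule sum.swap)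
  also have "\<dots> = (\<Sum>m\<in>S. \<Sum>q\<in>S. \<Sum>i\<in>S. \<Sum>k\<in>S. Bt i m * cnj (Bt k m) * (A k q * cnj (C i q)))"
    by (rule sum.cong[OF refl], rule sum.swap)
  also have "\<dots> = (\<Sum>m\<in>S. \<Sum>q\<in>S. uu S Bt A (m,q) * cnj (uu S Bt C (m,q)))"
    by (simp add: uu_def sum_distrib_left sum_distrib_right mult_ac)
  also have "\<dots> = (\<Sum>p\<in>S\<times>S. uu S Bt A p * cnj (uu S Bt C p))"
    by (simp add: sum.cartesian_product)
  finally show ?thesis .
qed

lemma sum_cnj_self: "(\<Sum>p\<in>T. a p * cnj (a p)) = complex_of_real (\<Sum>p\<in>T. (cmod (a p))\<^sup>2)"
  by (simp add: complex_norm_square[symmetric])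

lemma cs_sum:
  assumes "finite T"
  shows "(cmod (\<Sum>p\<in>T. a p * cnj (b p)))\<^sup>2 \<le> (\<Sum>p\<in>T. (cmod (a p))\<^sup>2) * (\<Sum>p\<in>T. (cmod (b p))\<^sup>2)"
proof -
  have "cmod (\<Sum>p\<in>T. a p * cnj (b p)) \<le> (\<Sum>p\<in>T. cmod (a p * cnj (b p)))" by (rule norm_sum)
  also have "\<dots> = (\<Sum>p\<in>T. \<bar>cmod (a p)\<bar> * \<bar>cmod (b p)\<bar>)" by (simp add: norm_mult)
  also have "\<dots> \<le> L2_set (\<lambda>p. cmod (a p)) T * L2_set (\<lambda>p. cmod (b p)) T" by (rule L2_set_mult_ineq)
  finally have h: "cmod (\<Sum>p\<in>T. a p * cnj (b p)) \<le> L2_set (\<lambda>p. cmod (a p)) T * L2_set (\<lambda>p. cmod (b p)) T" .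
  have "(cmod (\<Sum>p\<in>T. a p * cnj (b p)))\<^sup>2 \<le> (L2_set (\<lambda>p. cmod (a p)) T * L2_set (\<lambda>p. cmod (b p)) T)\<^sup>2"
    using h by (intro power_mono) auto
  also have "\<dots> = (\<Sum>p\<in>T. (cmod (a p))\<^sup>2) * (\<Sum>p\<in>T. (cmod (b p))\<^sup>2)"
    by (simp add: L2_set_def power_mult_distrib sum_nonneg)
  finally show ?thesis .
qed

lemma chol:
  "mposdef d A \<Longrightarrow> \<exists>B. \<forall>i<d. \<forall>k<d. A i k = (\<Sum>j<d. B i j * cnj (B k j))"
proof (induction d arbitrary: A)
  case 0
  show ?case by simp
next
  case (Suc d)
  have herm: "\<And>i k. i < Suc d \<Longrightarrow> k < Suc d \<Longrightarrow> A k i = cnj (A i k)"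
    using Suc.prems unfolding mposdef_def mhermitian_def by blast
  have pos: "\<And>x. (\<exists>i<Suc d. x i \<noteq> 0) \<Longrightarrow> 0 < Re (\<Sum>i<Suc d. \<Sum>j<Suc d. cnj (x i) * A i j * x j)"
    using Suc.prems unfolding mposdef_def by blast
  define a where "a = A d d"
  have areal: "cnj a = a"
  proof -
    have "A d d = cnj (A d d)" by (rule herm) auto
    thus ?thesis unfolding a_def by (rule sym)
  qed
  have apos: "0 < Re a"
  proof -
    have "0 < Re (\<Sum>i<Suc d. \<Sum>j<Suc d. cnj (if i = d then 1 else 0) * A i j * (if j = d then 1 else 0))"
      by (rule pos) auto
    moreover have "(\<Sum>i<Suc d. \<Sum>j<Suc d. cnj (if i = d then 1 else 0) * A i j * (if j = d then (1::complex) else 0)) = a"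
      by (simp add: a_def if_distrib cong: if_cong)
    ultimately show ?thesis by simp
  qed
  have a_of_real: "a = complex_of_real (Re a)" using areal by (metis Reals_cnj_iff of_real_Re)
  have anz: "a \<noteq> 0" using apos by auto
  define A' where "A' = (\<lambda>i k. A i k - A i d * A d k / a)"
  have "mposdef d A'"
    unfolding mposdef_def mhermitian_def
  proof (intro conjI allI impI)
    fix i j assume "i < d" "j < d"
    then show "A' j i = cnj (A' i j)"
      using herm[of i j] herm[of i d] herm[of d j] areal by (simp add: A'_def)
  next
    fix x :: "nat \<Rightarrow> complex" assume xnz: "\<exists>i<d. x i \<noteq> 0"
    define c where "c = (\<Sum>k<d. A d k * x k)"
    define y where "y = (\<lambda>i. if i < d then x i else if i = d then - c / a else 0)"
    have "0 < Re (\<Sum>i<Suc d. \<Sum>j<Suc d. cnj (y i) * A i j * y j)"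
      using xnz by (intro pos) (auto simp: y_def)
    moreover
    define Q where "Q = (\<Sum>i<d. \<Sum>k<d. cnj (x i) * A i k * x k)"
    have s1: "(\<Sum>i<d. cnj (x i) * A i d) = cnj c"
    proof -
      have "cnj c = (\<Sum>k<d. cnj (A d k) * cnj (x k))" by (simp add: c_def)
      also have "\<dots> = (\<Sum>i<d. cnj (x i) * A i d)"
      proof (rule sum.cong)
        fix k assume "k \<in> {..<d}"
        then show "cnj (A d k) * cnj (x k) = cnj (x k) * A k d" using herm[of d k] by simp
      qed simp
      finally show ?thesis by simp
    qed
    have "(\<Sum>i<Suc d. \<Sum>j<Suc d. cnj (y i) * A i j * y j)
        = Q + (\<Sum>i<d. cnj (x i) * A i d) * y d + cnj (y d) * c + cnj (y d) * a * y d"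
    proof -
      have yx: "\<And>i. i < d \<Longrightarrow> y i = x i" by (simp add: y_def)
      have "(\<Sum>i<Suc d. \<Sum>j<Suc d. cnj (y i) * A i j * y j)
        = (\<Sum>i<d. \<Sum>j<d. cnj (y i) * A i j * y j) + (\<Sum>i<d. cnj (y i) * A i d * y d)
          + (\<Sum>j<d. cnj (y d) * A d j * y j) + cnj (y d) * A d d * y d"
        by (simp add: sum.distrib)
      also have "(\<Sum>i<d. \<Sum>j<d. cnj (y i) * A i j * y j) = Q"
        unfolding Q_def by (intro sum.cong refl) (simp add: yx)
      also have "(\<Sum>i<d. cnj (y i) * A i d * y d) = (\<Sum>i<d. cnj (x i) * A i d) * y d"
        by (simp add: sum_distrib_right yx)
      also have "(\<Sum>j<d. cnj (y d) * A d j * y j) = cnj (y d) * c"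
        by (simp add: c_def sum_distrib_left yx mult.assoc)
      finally show ?thesis by (simp add: a_def)
    qed
    also have "\<dots> = Q - cnj c * c / a"
    proof -
      have yd: "y d = - c / a" by (simp add: y_def)
      have cyd: "cnj (y d) = - cnj c / a" using areal by (simp add: yd)
      show ?thesis unfolding s1 cyd yd using anz by (simp add: field_simps)
    qed
    also have "\<dots> = (\<Sum>i<d. \<Sum>j<d. cnj (x i) * A' i j * x j)"
    proof -
      have "(\<Sum>i<d. \<Sum>j<d. cnj (x i) * A' i j * x j)
          = Q - (\<Sum>i<d. \<Sum>j<d. cnj (x i) * A i d * (A d j * x j) / a)"
        by (simp add: A'_def Q_def algebra_simps sum_subtractf)
      also have "(\<Sum>i<d. \<Sum>j<d. cnj (x i) * A i d * (A d j * x j) / a) = (\<Sum>i<d. cnj (x i) * A i d) * c / a"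
        by (simp add: c_def sum_distrib_left sum_distrib_right sum_divide_distrib, rule sum.swap)
      also have "\<dots> = cnj c * c / a" by (simp add: s1)
      finally show ?thesis by simp
    qed
    ultimately show "0 < Re (\<Sum>i<d. \<Sum>j<d. cnj (x i) * A' i j * x j)" by simp
  qed
  then obtain B' where B': "\<And>i k. i < d \<Longrightarrow> k < d \<Longrightarrow> A' i k = (\<Sum>j<d. B' i j * cnj (B' k j))"
    using Suc.IH by blast
  define s where "s = complex_of_real (sqrt (Re a))"
  have scnj: "cnj s = s" by (simp add: s_def)
  have ss: "s * s = a" using apos by (subst a_of_real) (simp add: s_def flip: of_real_mult)
  have snz: "s \<noteq> 0" using apos by (simp add: s_def)
  define B where "B = (\<lambda>i j. if j < d then (if i < d then B' i j else 0)
                          else if j = d then (if i < d then A i d / s else s) else 0)"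
  have "\<forall>i<Suc d. \<forall>k<Suc d. A i k = (\<Sum>j<Suc d. B i j * cnj (B k j))"
  proof (intro allI impI)
    fix i k assume ik: "i < Suc d" "k < Suc d"
    have e: "(\<Sum>j<Suc d. B i j * cnj (B k j)) = (\<Sum>j<d. B i j * cnj (B k j)) + B i d * cnj (B k d)"
      by simp
    show "A i k = (\<Sum>j<Suc d. B i j * cnj (B k j))"
    proof (cases "i < d")
      case True
      show ?thesis
      proof (cases "k < d")
        case True
        have "(\<Sum>j<d. B i j * cnj (B k j)) = A' i k" using \<open>i<d\<close> True by (simp add: B' B_def)
        moreover have "B i d * cnj (B k d) = A i d * A d k / a"
          using \<open>i<d\<close> True herm[of k d] ik scnj ss[symmetric] snz by (simp add: B_def)
        ultimately show ?thesis using e by (simp add: A'_def)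
      next
        case False
        then have "k = d" using ik by auto
        then show ?thesis using e \<open>i<d\<close> scnj snz by (simp add: B_def)
      qed
    next
      case False
      then have "i = d" using ik by auto
      show ?thesis
      proof (cases "k < d")
        case True
        then show ?thesis using e \<open>i=d\<close> scnj snz herm[of k d] ik by (simp add: B_def)
      next
        case False
        then have "k = d" using ik by auto
        then show ?thesis using e \<open>i=d\<close> scnj ss by (simp add: B_def a_def)
      qed
    qed
  qed
  then show ?case by blast
qed




lemma finite_MI[simp]: "finite (MI d n)" by (simp add: MI_def finite_PiE)
lemma MI_mem: "i \<in> MI d n \<Longrightarrow> l < n \<Longrightarrow> i l < d" by (auto simp: MI_def PiE_iff)

lemma sum_prod_MI: fixes f :: "nat \<Rightarrow> nat \<Rightarrow> 'a::comm_semiring_1" shows "(\<Sum>m\<in>MI d n. \<Prod>l<n. f l (m l)) = (\<Prod>l<n. \<Sum>a<d. f l a)"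
  using prod_sum_PiE[of "{..<n}" "\<lambda>_. {..<d}" f] by (simp add: MI_def)

lemma tensor_mult:
  "gm (MI d n) (tensor_prod n A) (tensor_prod n B) = tensor_prod n (\<lambda>l. gm {..<d} (A l) (B l))"
proof (intro ext)
  fix i k
  have "gm (MI d n) (tensor_prod n A) (tensor_prod n B) i k
      = (\<Sum>m\<in>MI d n. \<Prod>l<n. A l (i l) (m l) * B l (m l) (k l))"
    by (simp add: gm_def tensor_prod_def prod.distrib)
  also have "\<dots> = tensor_prod n (\<lambda>l. gm {..<d} (A l) (B l)) i k"
    using sum_prod_MI[where f="\<lambda>l a. A l (i l) a * B l a (k l)" and d=d and n=n] by (simp add: tensor_prod_def gm_def)
  finally show "gm (MI d n) (tensor_prod n A) (tensor_prod n B) i k = tensor_prod n (\<lambda>l. gm {..<d} (A l) (B l)) i k" .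
qed

lemma tensor_trace: "gt (MI d n) (tensor_prod n A) = (\<Prod>l<n. gt {..<d} (A l))"
  using sum_prod_MI[where f="\<lambda>l a. A l a a" and d=d and n=n] by (simp add: gt_def tensor_prod_def)

lemma embed_tensor:
  assumes "j < n"
  shows "embed_at n j C = tensor_prod n (\<lambda>l. if l = j then C else mid)"
proof (intro ext)
  fix i k
  have "tensor_prod n (\<lambda>l. if l = j then C else mid) i k
     = (if j = j then C else mid) (i j) (k j) * (\<Prod>l\<in>{..<n} - {j}. (if l = j then C else mid) (i l) (k l))"
    unfolding tensor_prod_def using assms by (subst prod.remove[of _ j]) auto
  also have "\<dots> = embed_at n j C i k"
    unfolding embed_at_def by (auto intro!: prod.cong)
  finally show "embed_at n j C i k = tensor_prod n (\<lambda>l. if l = j then C else mid) i k" by simp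
qed

lemma ct_tensor: "ct (tensor_prod n A) = tensor_prod n (\<lambda>l. ct (A l))"
  by (simp add: ct_def tensor_prod_def fun_eq_iff)

lemma ct_mid[simp]: "ct mid = mid" by (auto simp: ct_def mid_def fun_eq_iff)

lemma ct_embed: "j < n \<Longrightarrow> ct (embed_at n j C) = embed_at n j (ct C)"
proof -
  assume j: "j < n"
  have "(\<lambda>l. ct (if l = j then C else mid)) = (\<lambda>l. if l = j then ct C else mid)" by auto
  thus ?thesis using j by (simp add: embed_tensor ct_tensor)
qed

lemma ct_sum: "ct (\<lambda>i k. \<Sum>j\<in>J. F j i k) = (\<lambda>i k. \<Sum>j\<in>J. ct (F j) i k)"
  by (simp add: ct_def)

lemma eqon_mid_R: "eqon {..<d} (gm {..<d} X mid) X"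
  unfolding eqon_def mid_def using gm_idR[of _ "{..<d}"] by auto
lemma eqon_mid_L: "eqon {..<d} (gm {..<d} mid X) X"
  unfolding eqon_def mid_def using gm_idL[of _ "{..<d}"] by auto

lemma sum_single: "finite A \<Longrightarrow> j \<in> A \<Longrightarrow> (\<And>k. k \<in> A \<Longrightarrow> k \<noteq> j \<Longrightarrow> g k = 0) \<Longrightarrow> sum g A = g j"
  by (subst sum.remove[of _ j]) (auto intro: sum.neutral)

lemma prod_single: "finite A \<Longrightarrow> j \<in> A \<Longrightarrow> (\<And>k. k \<in> A \<Longrightarrow> k \<noteq> j \<Longrightarrow> g k = 1) \<Longrightarrow> prod g A = g j"
  by (subst prod.remove[of _ j]) (auto intro: prod.neutral)

lemma tensor_embed_sum:
  assumes tr1: "\<And>l. l < n \<Longrightarrow> gt {..<d} (\<rho> l) = 1"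
    and tr0: "\<And>j. j < n \<Longrightarrow> gt {..<d} (gm {..<d} (\<rho> j) (M j)) = 0"
  shows "gt (MI d n) (gm (MI d n) (tensor_prod n \<rho>)
            (gm (MI d n) (\<lambda>i k. \<Sum>j<n. embed_at n j (M j) i k) (\<lambda>i k. \<Sum>j<n. embed_at n j (N j) i k)))
         = (\<Sum>j<n. gt {..<d} (gm {..<d} (\<rho> j) (gm {..<d} (M j) (N j))))"
proof -
  let ?S = "MI d n" and ?T = "{..<d}"
  define EM where "EM j = (\<lambda>l. if l = j then M j else mid)" for j
  define EN where "EN j = (\<lambda>l. if l = j then N j else mid)" for j
  have e1: "(\<lambda>i k. \<Sum>j<n. embed_at n j (M j) i k) = (\<lambda>i k. \<Sum>j<n. tensor_prod n (EM j) i k)"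
    by (intro ext sum.cong refl) (simp add: embed_tensor EM_def)
  have e2: "(\<lambda>i k. \<Sum>j<n. embed_at n j (N j) i k) = (\<lambda>i k. \<Sum>j<n. tensor_prod n (EN j) i k)"
    by (intro ext sum.cong refl) (simp add: embed_tensor EN_def)
  have "gt ?S (gm ?S (tensor_prod n \<rho>)
            (gm ?S (\<lambda>i k. \<Sum>j<n. embed_at n j (M j) i k) (\<lambda>i k. \<Sum>j<n. embed_at n j (N j) i k)))
     = (\<Sum>j<n. \<Sum>k<n. gt ?S (gm ?S (tensor_prod n \<rho>) (gm ?S (tensor_prod n (EM j)) (tensor_prod n (EN k)))))"
    unfolding e1 e2 gm_sumL gm_sumR gt_sum by simp
  also have "\<dots> = (\<Sum>j<n. \<Sum>k<n. \<Prod>l<n. gt ?T (gm ?T (\<rho> l) (gm ?T (EM j l) (EN k l))))"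
    by (simp add: tensor_mult tensor_trace)
  also have "\<dots> = (\<Sum>j<n. gt ?T (gm ?T (\<rho> j) (gm ?T (M j) (N j))))"
  proof (rule sum.cong[OF refl])
    fix j assume j: "j \<in> {..<n}"
    have off: "(\<Prod>l<n. gt ?T (gm ?T (\<rho> l) (gm ?T (EM j l) (EN k l)))) = 0" if k: "k \<in> {..<n}" "k \<noteq> j" for k
    proof -
      have "gt ?T (gm ?T (\<rho> j) (gm ?T (EM j j) (EN k j))) = gt ?T (gm ?T (\<rho> j) (M j))"
        using k by (intro gt_cong gm_cong) (simp_all add: EM_def EN_def eqon_mid_R)
      also have "\<dots> = 0" using j tr0 by simp
      finally show ?thesis using j by (intro prod_zero) auto
    qed
    have on: "(\<Prod>l<n. gt ?T (gm ?T (\<rho> l) (gm ?T (EM j l) (EN j l)))) = gt ?T (gm ?T (\<rho> j) (gm ?T (M j) (N j)))"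
    proof -
      have "(\<Prod>l<n. gt ?T (gm ?T (\<rho> l) (gm ?T (EM j l) (EN j l)))) = gt ?T (gm ?T (\<rho> j) (gm ?T (EM j j) (EN j j)))"
      proof (rule prod_single)
        fix l assume l: "l \<in> {..<n}" "l \<noteq> j"
        have "gt ?T (gm ?T (\<rho> l) (gm ?T (EM j l) (EN j l))) = gt ?T (\<rho> l)"
          using l by (intro gt_cong) (simp add: EM_def EN_def eqon_trans[OF gm_cong[OF eqon_refl eqon_mid_R] eqon_mid_R])
        then show "gt ?T (gm ?T (\<rho> l) (gm ?T (EM j l) (EN j l))) = 1" using tr1 l by simp
      qed (use j in auto)
      then show ?thesis by (simp add: EM_def EN_def)
    qed
    show "(\<Sum>k<n. \<Prod>l<n. gt ?T (gm ?T (\<rho> l) (gm ?T (EM j l) (EN k l)))) = gt ?T (gm ?T (\<rho> j) (gm ?T (M j) (N j)))"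
      by (subst sum_single[of _ j]) (use j off on in auto)
  qed
  finally show ?thesis .
qed




lemma posdef_inv:
  assumes pd: "mposdef d A"
  shows "\<exists>R. eqon {..<d} (gm {..<d} A R) mid \<and> eqon {..<d} (gm {..<d} R A) mid"
proof -
  define M where "M = mat d d (\<lambda>(i,j). A i j)"
  have Mc: "M \<in> carrier_mat d d" by (simp add: M_def)
  have "det M \<noteq> 0"
  proof
    assume "det M = 0"
    then obtain v where v: "v \<in> carrier_vec d" "v \<noteq> 0\<^sub>v d" "M *\<^sub>v v = 0\<^sub>v d"
      using det_0_iff_vec_prod_zero_field[OF Mc] by blast
    define x where "x = (\<lambda>i. if i < d then vec_index v i else 0)"
    have "\<exists>i<d. x i \<noteq> 0"
    proof (rule ccontr)
      assume "\<not> (\<exists>i<d. x i \<noteq> 0)"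
      then have "v = 0\<^sub>v d" using v(1) by (intro eq_vecI) (auto simp: x_def)
      with v(2) show False by simp
    qed
    then have "0 < Re (\<Sum>i<d. \<Sum>j<d. cnj (x i) * A i j * x j)" using pd unfolding mposdef_def by blast
    moreover have "\<And>i. i < d \<Longrightarrow> (\<Sum>j<d. A i j * x j) = 0"
    proof -
      fix i assume i: "i < d"
      have "vec_index (M *\<^sub>v v) i = 0" using v(3) i by simp
      moreover have "vec_index (M *\<^sub>v v) i = (\<Sum>j<d. A i j * x j)"
        using i v(1) Mc by (auto simp: M_def scalar_prod_def row_def x_def atLeast0LessThan intro!: sum.cong)
      ultimately show "(\<Sum>j<d. A i j * x j) = 0" by simp
    qed
    then have "(\<Sum>i<d. \<Sum>j<d. cnj (x i) * A i j * x j) = 0"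
      by (simp add: mult.assoc flip: sum_distrib_left)
    ultimately show False by simp
  qed
  then have "M \<in> Units (ring_mat TYPE(complex) d ())" by (rule det_non_zero_imp_unit[OF Mc])
  then obtain N where N: "N \<in> carrier_mat d d" "N * M = 1\<^sub>m d" "M * N = 1\<^sub>m d"
    by (auto simp: Units_def ring_mat_def)
  define R where "R = (\<lambda>i j. N $$ (i,j))"
  have "eqon {..<d} (gm {..<d} A R) mid"
  proof (unfold eqon_def, intro ballI)
    fix i k assume "i \<in> {..<d}" "k \<in> {..<d}"
    then have "(M * N) $$ (i,k) = gm {..<d} A R i k"
      using N(1) by (auto simp: M_def R_def gm_def scalar_prod_def row_def col_def atLeast0LessThan intro!: sum.cong)
    then show "gm {..<d} A R i k = mid i k" using N(3) \<open>i \<in> _\<close> \<open>k \<in> _\<close> by (simp add: mid_def)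
  qed
  moreover have "eqon {..<d} (gm {..<d} R A) mid"
  proof (unfold eqon_def, intro ballI)
    fix i k assume "i \<in> {..<d}" "k \<in> {..<d}"
    then have "(N * M) $$ (i,k) = gm {..<d} R A i k"
      using N(1) by (auto simp: M_def R_def gm_def scalar_prod_def row_def col_def atLeast0LessThan intro!: sum.cong)
    then show "gm {..<d} R A i k = mid i k" using N(2) \<open>i \<in> _\<close> \<open>k \<in> _\<close> by (simp add: mid_def)
  qed
  ultimately show ?thesis by blast
qed

lemma minv_props:
  assumes "mposdef d A"
  shows "eqon {..<d} (gm {..<d} A (minv d A)) mid \<and> eqon {..<d} (gm {..<d} (minv d A) A) mid"
proof -
  obtain R where R: "eqon {..<d} (gm {..<d} A R) mid" "eqon {..<d} (gm {..<d} R A) mid"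
    using posdef_inv[OF assms] by blast
  define P where "P = (\<lambda>B. \<forall>i<d. \<forall>k<d. mmult d A B i k = mid i k \<and> mmult d B A i k = mid i k)"
  have "P R" using R unfolding P_def eqon_def mmult_gm by blast
  then have "P (SOME B. P B)" by (rule someI[where P = P])
  moreover have "minv d A = (SOME B. P B)" unfolding minv_def P_def by (rule refl)
  ultimately have "P (minv d A)" by simp
  then have "\<forall>i<d. \<forall>k<d. mmult d A (minv d A) i k = mid i k \<and> mmult d (minv d A) A i k = mid i k"
    unfolding P_def .
  then show ?thesis by (simp add: eqon_def mmult_gm)
qed




declare eqon_trans[trans]

lemma eqon_cong_gm_left: "eqon S A A' \<Longrightarrow> eqon S (gm S A B) (gm S A' B)"
  by (rule gm_cong) auto
lemma eqon_cong_gm_right: "eqon S B B' \<Longrightarrow> eqon S (gm S A B) (gm S A B')"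
  by (rule gm_cong) auto

lemma inv_herm:
  assumes rR: "eqon {..<d} (gm {..<d} \<rho> R) mid" and Rr: "eqon {..<d} (gm {..<d} R \<rho>) mid"
    and rh: "eqon {..<d} (ct \<rho>) \<rho>"
  shows "eqon {..<d} (ct R) R"
proof -
  let ?T = "{..<d}"
  have "eqon ?T (ct R) (gm ?T (ct R) mid)" by (rule eqon_sym[OF eqon_mid_R])
  also have "eqon ?T \<dots> (gm ?T (ct R) (gm ?T \<rho> R))" by (rule eqon_cong_gm_right[OF eqon_sym[OF rR]])
  also have "gm ?T (ct R) (gm ?T \<rho> R) = gm ?T (gm ?T (ct R) \<rho>) R" by (simp add: gm_assoc)
  also have "eqon ?T \<dots> (gm ?T (gm ?T (ct R) (ct \<rho>)) R)"
    by (rule eqon_cong_gm_left[OF eqon_cong_gm_right[OF eqon_sym[OF rh]]])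
  also have "gm ?T (gm ?T (ct R) (ct \<rho>)) R = gm ?T (ct (gm ?T \<rho> R)) R" by (simp add: ct_gm)
  also have "eqon ?T \<dots> (gm ?T (ct mid) R)" by (rule eqon_cong_gm_left[OF ct_cong[OF rR]])
  also have "eqon ?T \<dots> R" by (simp add: eqon_mid_L)
  finally show ?thesis .
qed
lemma eqon_pointwise: "(\<And>i k. i \<in> S \<Longrightarrow> k \<in> S \<Longrightarrow> A i k = B i k) \<Longrightarrow> eqon S A B"
  by (simp add: eqon_def)

lemma factor_analysis:
  fixes \<rho> D R B H :: cmat
  assumes gram: "eqon {..<d} \<rho> (\<lambda>i k. \<Sum>m\<in>{..<d}. B i m * cnj (B k m))"
    and rR: "eqon {..<d} (gm {..<d} \<rho> R) mid" and Rr: "eqon {..<d} (gm {..<d} R \<rho>) mid"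
    and rh: "eqon {..<d} (ct \<rho>) \<rho>"
    and Dh: "eqon {..<d} (ct D) D" and trD: "gt {..<d} D = 0"
    and H: "eqon {..<d} H (\<lambda>a b. (1/2) * (gm {..<d} R D a b + gm {..<d} D R a b))"
  shows "gt {..<d} (gm {..<d} \<rho> (gm {..<d} H H)) \<in> \<real>"
    and "(\<Sum>p\<in>{..<d}\<times>{..<d}. (cmod (uu {..<d} B (gm {..<d} R D) p))\<^sup>2) \<le> Re (gt {..<d} (gm {..<d} \<rho> (gm {..<d} H H)))"
    and "gt {..<d} (gm {..<d} \<rho> (gm {..<d} R D)) = 0"
    and "gt {..<d} (gm {..<d} \<rho> H) = 0"
    and "gt {..<d} (gm {..<d} \<rho> (gm {..<d} (gm {..<d} R D) (ct (gm {..<d} R D))))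
          = of_real (\<Sum>p\<in>{..<d}\<times>{..<d}. (cmod (uu {..<d} B (gm {..<d} R D) p))\<^sup>2)"
proof -
  let ?T = "{..<d}"
  define K where "K = gm ?T R D"
  define Aa where "Aa = (\<Sum>p\<in>?T\<times>?T. (cmod (uu ?T B K p))\<^sup>2)"
  define Bb where "Bb = (\<Sum>p\<in>?T\<times>?T. (cmod (uu ?T B (ct K) p))\<^sup>2)"
  have Rh: "eqon ?T (ct R) R" by (rule inv_herm[OF rR Rr rh])
  have cK: "eqon ?T (ct K) (gm ?T D R)"
    unfolding K_def ct_gm by (rule gm_cong[OF Dh Rh])
  have rK: "eqon ?T (gm ?T \<rho> K) D"
  proof -
    have "eqon ?T (gm ?T \<rho> K) (gm ?T (gm ?T \<rho> R) D)" by (simp add: K_def gm_assoc)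
    also have "eqon ?T \<dots> (gm ?T mid D)" by (rule eqon_cong_gm_left[OF rR])
    also have "eqon ?T \<dots> D" by (rule eqon_mid_L)
    finally show ?thesis .
  qed
  have form: "\<And>A C. gt ?T (gm ?T \<rho> (gm ?T A (ct C))) = (\<Sum>p\<in>?T\<times>?T. uu ?T B A p * cnj (uu ?T B C p))"
    by (rule gram_form[OF gram]) simp
  define t1 where "t1 = gt ?T (gm ?T \<rho> (gm ?T K K))"
  define t2 where "t2 = gt ?T (gm ?T \<rho> (gm ?T K (ct K)))"
  define t3 where "t3 = gt ?T (gm ?T \<rho> (gm ?T (ct K) K))"
  define t4 where "t4 = gt ?T (gm ?T \<rho> (gm ?T (ct K) (ct K)))"
  have t2: "t2 = of_real Aa" unfolding t2_def form Aa_def by (rule sum_cnj_self)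
  have t3: "t3 = of_real Bb"
  proof -
    have "t3 = gt ?T (gm ?T \<rho> (gm ?T (ct K) (ct (ct K))))" by (simp add: t3_def)
    then show ?thesis unfolding form Bb_def by (simp add: sum_cnj_self)
  qed
  have t1f: "t1 = (\<Sum>p\<in>?T\<times>?T. uu ?T B K p * cnj (uu ?T B (ct K) p))"
  proof -
    have "t1 = gt ?T (gm ?T \<rho> (gm ?T K (ct (ct K))))" by (simp add: t1_def)
    then show ?thesis unfolding form .
  qed
  have t4: "t4 = cnj t1"
  proof -
    have "t4 = (\<Sum>p\<in>?T\<times>?T. uu ?T B (ct K) p * cnj (uu ?T B K p))" unfolding t4_def form ..
    then show ?thesis unfolding t1f by (simp add: mult.commute)
  qed
  have t12: "t1 = t2"
  proof -
    have "t1 = gt ?T (gm ?T (gm ?T \<rho> K) K)" by (simp add: t1_def gm_assoc)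
    also have "\<dots> = gt ?T (gm ?T D K)" by (rule gt_cong[OF eqon_cong_gm_left[OF rK]])
    also have "\<dots> = gt ?T (gm ?T (gm ?T D R) D)" by (simp add: K_def gm_assoc)
    also have "\<dots> = gt ?T (gm ?T D (gm ?T D R))" by (rule gt_comm)
    also have "\<dots> = gt ?T (gm ?T D (ct K))" by (rule gt_cong[OF eqon_cong_gm_right[OF eqon_sym[OF cK]]])
    also have "\<dots> = gt ?T (gm ?T (gm ?T \<rho> K) (ct K))" by (rule gt_cong[OF eqon_cong_gm_left[OF eqon_sym[OF rK]]])
    also have "\<dots> = t2" by (simp add: t2_def gm_assoc)
    finally show ?thesis .
  qed
  have Aa0: "0 \<le> Aa" unfolding Aa_def by (intro sum_nonneg) auto
  have Bb0: "0 \<le> Bb" unfolding Bb_def by (intro sum_nonneg) auto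
  have cs: "(cmod t1)\<^sup>2 \<le> Aa * Bb" unfolding t1f Aa_def Bb_def by (rule cs_sum) simp
  have AB: "Aa \<le> Bb"
  proof (cases "Aa = 0")
    case True then show ?thesis using Bb0 by simp
  next
    case False
    then have "0 < Aa" using Aa0 by simp
    moreover have "Aa * Aa \<le> Aa * Bb" using cs t12 t2 Aa0 by (simp add: power2_eq_square)
    ultimately show ?thesis by simp
  qed
  define H' where "H' = (\<lambda>a b. (1/2) * (K a b + ct K a b))"
  have HH': "eqon ?T H H'"
    using H cK unfolding H'_def K_def eqon_def by simp
  have "gt ?T (gm ?T \<rho> (gm ?T H H)) = gt ?T (gm ?T \<rho> (gm ?T H' H'))"
    by (rule gt_cong[OF eqon_cong_gm_right[OF gm_cong[OF HH' HH']]])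
  also have "\<dots> = (1/4) * (t1 + t2 + t3 + t4)"
    unfolding H'_def t1_def t2_def t3_def t4_def
    by (simp only: gm_addL gm_addR gm_smultL gm_smultR gt_add gt_smult) (simp add: algebra_simps)
  also have "\<dots> = of_real ((3 * Aa + Bb) / 4)"
    using t12 t2 t3 t4 by simp
  finally have Itil: "gt ?T (gm ?T \<rho> (gm ?T H H)) = of_real ((3 * Aa + Bb) / 4)" .
  show "gt ?T (gm ?T \<rho> (gm ?T H H)) \<in> \<real>" unfolding Itil by simp
  show "(\<Sum>p\<in>?T\<times>?T. (cmod (uu ?T B (gm ?T R D) p))\<^sup>2) \<le> Re (gt ?T (gm ?T \<rho> (gm ?T H H)))"
    unfolding Itil using AB by (simp add: Aa_def K_def)
  have trK: "gt ?T (gm ?T \<rho> K) = 0" using gt_cong[OF rK] trD by simp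
  then show "gt ?T (gm ?T \<rho> (gm ?T R D)) = 0" by (simp add: K_def)
  have trcK: "gt ?T (gm ?T \<rho> (ct K)) = 0"
  proof -
    have "gt ?T (gm ?T \<rho> (ct K)) = gt ?T (gm ?T \<rho> (gm ?T D R))" by (rule gt_cong[OF eqon_cong_gm_right[OF cK]])
    also have "\<dots> = gt ?T (gm ?T (gm ?T D R) \<rho>)" by (rule gt_comm)
    also have "\<dots> = gt ?T (gm ?T D (gm ?T R \<rho>))" by (simp add: gm_assoc)
    also have "\<dots> = gt ?T (gm ?T D mid)" by (rule gt_cong[OF eqon_cong_gm_right[OF Rr]])
    also have "\<dots> = gt ?T D" by (rule gt_cong[OF eqon_mid_R])
    finally show ?thesis using trD by simp
  qed
  have "gt ?T (gm ?T \<rho> H) = gt ?T (gm ?T \<rho> H')" by (rule gt_cong[OF eqon_cong_gm_right[OF HH']])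
  also have "\<dots> = (1/2) * (gt ?T (gm ?T \<rho> K) + gt ?T (gm ?T \<rho> (ct K)))"
    unfolding H'_def by (simp only: gm_addR gm_smultR gt_add gt_smult)
  finally show "gt ?T (gm ?T \<rho> H) = 0" using trK trcK by simp
  show "gt ?T (gm ?T \<rho> (gm ?T (gm ?T R D) (ct (gm ?T R D)))) = of_real (\<Sum>p\<in>?T\<times>?T. (cmod (uu ?T B (gm ?T R D) p))\<^sup>2)"
    using t2 by (simp add: t2_def Aa_def K_def)
qed




lemma hvd_prod:
  fixes f :: "nat \<Rightarrow> real \<Rightarrow> complex"
  assumes "\<And>l. l < n \<Longrightarrow> (f l has_vector_derivative f' l) (at x)"
  shows "((\<lambda>t. \<Prod>l<n. f l t) has_vector_derivative (\<Sum>j<n. \<Prod>l<n. if l = j then f' l else f l x)) (at x)"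
  using assms
proof (induction n)
  case 0
  then show ?case by simp
next
  case (Suc n)
  have IH: "((\<lambda>t. \<Prod>l<n. f l t) has_vector_derivative (\<Sum>j<n. \<Prod>l<n. if l = j then f' l else f l x)) (at x)"
    using Suc by auto
  have "((\<lambda>t. (\<Prod>l<n. f l t) * f n t) has_vector_derivative
          ((\<Prod>l<n. f l x) * f' n + (\<Sum>j<n. \<Prod>l<n. if l = j then f' l else f l x) * f n x)) (at x)"
    by (rule has_vector_derivative_mult[OF IH Suc.prems]) simp
  moreover have "(\<Sum>j<Suc n. \<Prod>l<Suc n. if l = j then f' l else f l x)
      = (\<Prod>l<n. f l x) * f' n + (\<Sum>j<n. \<Prod>l<n. if l = j then f' l else f l x) * f n x"
  proof -
    have a: "(\<Prod>l<Suc n. if l = n then f' l else f l x) = (\<Prod>l<n. f l x) * f' n"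
      by (simp add: prod.lessThan_Suc)
    have b: "(\<Prod>l<Suc n. if l = j then f' l else f l x) = (\<Prod>l<n. if l = j then f' l else f l x) * f n x"
      if "j < n" for j using that by (simp add: prod.lessThan_Suc)
    show ?thesis by (simp add: a b sum_distrib_right)
  qed
  ultimately show ?case by (simp add: add.commute)
qed

lemma rK_lemma:
  assumes "eqon {..<d} (gm {..<d} \<rho> R) mid"
  shows "eqon {..<d} (gm {..<d} \<rho> (gm {..<d} R D)) D"
proof -
  have "eqon {..<d} (gm {..<d} \<rho> (gm {..<d} R D)) (gm {..<d} (gm {..<d} \<rho> R) D)" by (simp add: gm_assoc)
  also have "eqon {..<d} \<dots> (gm {..<d} mid D)" by (rule eqon_cong_gm_left[OF assms])
  also have "eqon {..<d} \<dots> D" by (rule eqon_mid_L)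
  finally show ?thesis .
qed

lemma deriv_unique_on:
  fixes f :: "real \<Rightarrow> complex"
  assumes "(f has_vector_derivative f') (at x)" "(g has_vector_derivative g') (at x)"
    and "open I" "x \<in> I" "\<And>t. t \<in> I \<Longrightarrow> f t = g t"
  shows "f' = g'"
proof -
  have "(g has_vector_derivative f') (at x)"
    by (rule has_vector_derivative_transform_within_open[OF assms(1) assms(3) assms(4)]) (use assms(5) in auto)
  then show ?thesis using assms(2) by (rule vector_derivative_unique_at)
qed




theorem mainTheorem9:
  fixes d n :: nat and I :: "real set"
    and rho :: "nat \<Rightarrow> real \<Rightarrow> cmat" and Th :: tmat
  assumes "d \<ge> 1" and "n \<ge> 1"
    and "open I" and "is_interval I" and "I \<noteq> {}"
    and dens: "\<And>j \<theta>. j < n \<Longrightarrow> \<theta> \<in> I \<Longrightarrow> pd_density d (rho j \<theta>)"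
    and diff: "\<And>j \<theta> a b. j < n \<Longrightarrow> \<theta> \<in> I \<Longrightarrow> a < d \<Longrightarrow> b < d \<Longrightarrow>
                 (\<lambda>t. rho j t a b) differentiable (at \<theta>)"
    and selfadj: "thermitian d n Th"
    and unbiased: "\<And>\<theta>. \<theta> \<in> I \<Longrightarrow>
                 ttrace d n (tmult d n (tensor_prod n (\<lambda>j. rho j \<theta>)) Th) = complex_of_real \<theta>"
  shows "\<forall>\<theta>\<in>I.
           tvar d n (tensor_prod n (\<lambda>j. rho j \<theta>)) Th \<theta> \<in> \<real>
         \<and> (\<forall>j<n. Itil d (rho j) \<theta> \<in> \<real>)
         \<and> Re (tvar d n (tensor_prod n (\<lambda>j. rho j \<theta>)) Th \<theta>)
             \<ge> 1 / (\<Sum>j<n. Re (Itil d (rho j) \<theta>))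
         \<and> (\<Sum>j<n. Itil d (rho j) \<theta>) =
             (let Hb = (\<lambda>i k. \<Sum>j<n. embed_at n j (Htil d (rho j) \<theta>) i k)
              in ttrace d n (tmult d n (tensor_prod n (\<lambda>j. rho j \<theta>)) (tmult d n Hb Hb)))
         \<and> (n = 1 \<longrightarrow> Re (tvar d n (tensor_prod n (\<lambda>j. rho j \<theta>)) Th \<theta>)
                        \<ge> 1 / Re (Itil d (rho 0) \<theta>))
         \<and> ((\<forall>j<n. rho j = rho 0) \<longrightarrow>
              Re (tvar d n (tensor_prod n (\<lambda>j. rho j \<theta>)) Th \<theta>)
                \<ge> 1 / (real n * Re (Itil d (rho 0) \<theta>)))"
proof (intro ballI)
  fix \<theta> assume th: "\<theta> \<in> I"
  let ?T = "{..<d}" and ?S = "MI d n"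
  define \<rho> where "\<rho> = (\<lambda>l. rho l \<theta>)"
  define D where "D = (\<lambda>l. mderiv (rho l) \<theta>)"
  define R where "R = (\<lambda>l. minv d (\<rho> l))"
  define Hj where "Hj = (\<lambda>l. Htil d (rho l) \<theta>)"
  define K where "K = (\<lambda>l. gm ?T (R l) (D l))"
  have pdt: "\<And>l t. l < n \<Longrightarrow> t \<in> I \<Longrightarrow> mposdef d (rho l t) \<and> gt ?T (rho l t) = 1"
    using dens by (simp add: pd_density_def mtrace_gt)
  have pd: "\<And>l. l < n \<Longrightarrow> mposdef d (\<rho> l)" using pdt th by (simp add: \<rho>_def)
  have tr1: "\<And>l. l < n \<Longrightarrow> gt ?T (\<rho> l) = 1" using pdt th by (simp add: \<rho>_def)
  have hermt: "\<And>l t a b. l < n \<Longrightarrow> t \<in> I \<Longrightarrow> a < d \<Longrightarrow> b < d \<Longrightarrow> rho l t b a = cnj (rho l t a b)"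
  proof -
    fix l t a b assume "l < n" "t \<in> I" "a < d" "b < d"
    then have "mhermitian d (rho l t)" using pdt unfolding mposdef_def by blast
    then show "rho l t b a = cnj (rho l t a b)" using \<open>a < d\<close> \<open>b < d\<close> unfolding mhermitian_def by blast
  qed
  have rh: "\<And>l. l < n \<Longrightarrow> eqon ?T (ct (\<rho> l)) (\<rho> l)"
  proof (rule eqon_pointwise)
    fix l i k assume "l < n" "i \<in> ?T" "k \<in> ?T"
    then show "ct (\<rho> l) i k = \<rho> l i k" using hermt[of l \<theta> k i] th by (simp add: ct_def \<rho>_def)
  qed
  have "\<forall>l\<in>{..<n}. \<exists>Bl. \<forall>i<d. \<forall>k<d. \<rho> l i k = (\<Sum>j<d. Bl i j * cnj (Bl k j))"
    using chol pd by blast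
  then obtain B where B0: "\<forall>l\<in>{..<n}. \<forall>i<d. \<forall>k<d. \<rho> l i k = (\<Sum>j<d. B l i j * cnj (B l k j))"
    by (rule bchoice[THEN exE]) blast
  have gram: "\<And>l. l < n \<Longrightarrow> eqon ?T (\<rho> l) (\<lambda>i k. \<Sum>m\<in>?T. B l i m * cnj (B l k m))"
    using B0 by (auto simp: eqon_def)
  have hd: "\<And>l a b. l < n \<Longrightarrow> a < d \<Longrightarrow> b < d \<Longrightarrow> ((\<lambda>t. rho l t a b) has_vector_derivative D l a b) (at \<theta>)"
    using diff th by (simp add: D_def mderiv_def vector_derivative_works[symmetric])
  have Dh: "\<And>l. l < n \<Longrightarrow> eqon ?T (ct (D l)) (D l)"
  proof (rule eqon_pointwise)
    fix l i k assume l: "l < n" and ik: "i \<in> ?T" "k \<in> ?T"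
    have "((\<lambda>t. cnj (rho l t k i)) has_vector_derivative cnj (D l k i)) (at \<theta>)"
      using hd[OF l] ik by (intro has_vector_derivative_cnj) auto
    moreover have "((\<lambda>t. rho l t i k) has_vector_derivative D l i k) (at \<theta>)" using hd[OF l] ik by auto
    ultimately have "cnj (D l k i) = D l i k"
      by (rule deriv_unique_on[OF _ _ \<open>open I\<close> th]) (use hermt[of l _ i k] l ik in auto)
    then show "ct (D l) i k = D l i k" by (simp add: ct_def)
  qed
  have trD: "\<And>l. l < n \<Longrightarrow> gt ?T (D l) = 0"
  proof -
    fix l assume l: "l < n"
    have "((\<lambda>t. \<Sum>a<d. rho l t a a) has_vector_derivative (\<Sum>a<d. D l a a)) (at \<theta>)"
      using hd[OF l] by (intro has_vector_derivative_sum) auto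
    moreover have "((\<lambda>t. 1::complex) has_vector_derivative 0) (at \<theta>)" by simp
    ultimately have "(\<Sum>a<d. D l a a) = 0"
      by (rule deriv_unique_on[OF _ _ \<open>open I\<close> th]) (use pdt[OF l] in \<open>simp add: gt_def\<close>)
    then show "gt ?T (D l) = 0" by (simp add: gt_def)
  qed
  have inv: "\<And>l. l < n \<Longrightarrow> eqon ?T (gm ?T (\<rho> l) (R l)) mid \<and> eqon ?T (gm ?T (R l) (\<rho> l)) mid"
    using minv_props pd by (simp add: R_def)
  have HjE: "\<And>l. eqon ?T (Hj l) (\<lambda>a b. (1/2) * (gm ?T (R l) (D l) a b + gm ?T (D l) (R l) a b))"
    by (simp add: Hj_def Htil_def R_def D_def \<rho>_def mmult_gm)
  note FA = factor_analysis[OF gram conjunct1[OF inv] conjunct2[OF inv] rh Dh trD HjE]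
  have Itil_eq: "\<And>l. Itil d (rho l) \<theta> = gt ?T (gm ?T (\<rho> l) (gm ?T (Hj l) (Hj l)))"
    by (simp add: Itil_def mtrace_gt mmult_gm Hj_def \<rho>_def)
  define Aa where "Aa = (\<lambda>l. \<Sum>p\<in>?T\<times>?T. (cmod (uu ?T (B l) (K l) p))\<^sup>2)"
  have Itil_real: "\<And>l. l < n \<Longrightarrow> Itil d (rho l) \<theta> \<in> \<real>" using FA(1) by (simp add: Itil_eq)
  have Itil_ge: "\<And>l. l < n \<Longrightarrow> Aa l \<le> Re (Itil d (rho l) \<theta>)" using FA(2) by (simp add: Itil_eq Aa_def K_def)
  have trK: "\<And>l. l < n \<Longrightarrow> gt ?T (gm ?T (\<rho> l) (K l)) = 0" using FA(3) by (simp add: K_def)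
  have trH: "\<And>l. l < n \<Longrightarrow> gt ?T (gm ?T (\<rho> l) (Hj l)) = 0" using FA(4) by simp
  have KK: "\<And>l. l < n \<Longrightarrow> gt ?T (gm ?T (\<rho> l) (gm ?T (K l) (ct (K l)))) = of_real (Aa l)"
    using FA(5) by (simp add: K_def Aa_def)

  define P where "P = tensor_prod n \<rho>"
  have Pfold: "tensor_prod n (\<lambda>j. rho j \<theta>) = P" by (simp add: P_def \<rho>_def)
  define Bt where "Bt = tensor_prod n B"
  have Pgram: "eqon ?S P (\<lambda>i k. \<Sum>m\<in>?S. Bt i m * cnj (Bt k m))"
  proof (rule eqon_pointwise)
    fix i k assume ik: "i \<in> ?S" "k \<in> ?S"
    have "(\<lambda>i k. \<Sum>m\<in>?S. Bt i m * cnj (Bt k m)) = gm ?S Bt (ct Bt)" by (simp add: gm_def ct_def fun_eq_iff)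
    also have "\<dots> = tensor_prod n (\<lambda>l. gm ?T (B l) (ct (B l)))" by (simp add: Bt_def ct_tensor tensor_mult)
    finally have e0: "(\<lambda>i k. \<Sum>m\<in>?S. Bt i m * cnj (Bt k m)) = tensor_prod n (\<lambda>l. gm ?T (B l) (ct (B l)))" .
    have e: "(\<Sum>m\<in>?S. Bt i m * cnj (Bt k m)) = tensor_prod n (\<lambda>l. gm ?T (B l) (ct (B l))) i k" using e0[THEN fun_cong, THEN fun_cong, of i k] by simp
    have "tensor_prod n (\<lambda>l. gm ?T (B l) (ct (B l))) i k = P i k"
      unfolding tensor_prod_def P_def
    proof (rule prod.cong[OF refl])
      fix l assume l: "l \<in> {..<n}"
      then have "i l < d" "k l < d" using ik MI_mem by auto
      then show "gm ?T (B l) (ct (B l)) (i l) (k l) = \<rho> l (i l) (k l)"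
        using B0 l by (simp add: gm_def ct_def)
    qed
    then show "P i k = (\<Sum>m\<in>?S. Bt i m * cnj (Bt k m))" using e by simp
  qed
  have form: "\<And>A C. gt ?S (gm ?S P (gm ?S A (ct C))) = (\<Sum>p\<in>?S\<times>?S. uu ?S Bt A p * cnj (uu ?S Bt C p))"
    by (rule gram_form[OF Pgram]) simp
  define X where "X = (\<lambda>i k. Th i k - complex_of_real \<theta> * tid i k)"
  have Xh: "eqon ?S (ct X) X"
  proof (rule eqon_pointwise)
    fix i k assume ik: "i \<in> ?S" "k \<in> ?S"
    have "Th i k = cnj (Th k i)" using selfadj ik unfolding thermitian_def by blast
    then show "ct X i k = X i k" by (simp add: ct_def X_def tid_def)
  qed
  define V where "V = (\<Sum>p\<in>?S\<times>?S. (cmod (uu ?S Bt X p))\<^sup>2)"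
  have tvar: "tvar d n P Th \<theta> = of_real V"
  proof -
    have "tvar d n P Th \<theta> = gt ?S (gm ?S P (gm ?S X X))"
      by (simp add: tvar_def Let_def tmult_gm ttrace_gt X_def)
    also have "\<dots> = gt ?S (gm ?S P (gm ?S X (ct X)))"
      by (rule gt_cong[OF eqon_cong_gm_right[OF eqon_cong_gm_right[OF eqon_sym[OF Xh]]]])
    also have "\<dots> = of_real V" unfolding form V_def by (rule sum_cnj_self)
    finally show ?thesis .
  qed
  have V0: "0 \<le> V" unfolding V_def by (intro sum_nonneg) auto

  define P' where "P' = (\<lambda>i k. \<Sum>j<n. tensor_prod n (\<lambda>l. if l = j then D l else \<rho> l) i k)"
  define f where "f = (\<lambda>t. gt ?S (gm ?S (tensor_prod n (\<lambda>l. rho l t)) X))"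
  have hf: "(f has_vector_derivative gt ?S (gm ?S P' X)) (at \<theta>)"
  proof -
    have ent: "((\<lambda>t. tensor_prod n (\<lambda>l. rho l t) i k) has_vector_derivative P' i k) (at \<theta>)"
      if ik: "i \<in> ?S" "k \<in> ?S" for i k
    proof -
      have "((\<lambda>t. \<Prod>l<n. rho l t (i l) (k l)) has_vector_derivative
          (\<Sum>j<n. \<Prod>l<n. if l = j then D l (i l) (k l) else rho l \<theta> (i l) (k l))) (at \<theta>)"
        by (rule hvd_prod) (use hd ik MI_mem in auto)
      moreover have "(\<Sum>j<n. \<Prod>l<n. if l = j then D l (i l) (k l) else rho l \<theta> (i l) (k l)) = P' i k"
        unfolding P'_def tensor_prod_def \<rho>_def by (intro sum.cong prod.cong refl) auto
      ultimately show ?thesis by (simp add: tensor_prod_def)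
    qed
    have "((\<lambda>t. \<Sum>i\<in>?S. \<Sum>j\<in>?S. tensor_prod n (\<lambda>l. rho l t) i j * X j i) has_vector_derivative
          (\<Sum>i\<in>?S. \<Sum>j\<in>?S. P' i j * X j i)) (at \<theta>)"
      by (intro has_vector_derivative_sum has_vector_derivative_mult_left ent)
    then show ?thesis by (simp add: f_def gt_def gm_def)
  qed
  have fI: "f t = of_real (t - \<theta>)" if t: "t \<in> I" for t
  proof -
    let ?Pt = "tensor_prod n (\<lambda>l. rho l t)"
    have "f t = gt ?S (gm ?S ?Pt Th) - of_real \<theta> * gt ?S (gm ?S ?Pt tid)"
      unfolding f_def X_def by (simp only: gm_diffR gm_smultR gt_diff gt_smult)
    moreover have "gt ?S (gm ?S ?Pt Th) = of_real t" using unbiased[OF t] by (simp add: ttrace_gt tmult_gm)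
    moreover have "gt ?S (gm ?S ?Pt tid) = 1"
    proof -
      have "gt ?S (gm ?S ?Pt tid) = gt ?S ?Pt"
        by (rule gt_cong) (auto simp: eqon_def tid_def gm_idR)
      also have "\<dots> = 1" using pdt t by (simp add: tensor_trace)
      finally show ?thesis .
    qed
    ultimately show ?thesis by simp
  qed
  have "((\<lambda>t. complex_of_real (t - \<theta>)) has_vector_derivative 1) (at \<theta>)"
    by (auto intro!: derivative_eq_intros)
  then have P'X: "gt ?S (gm ?S P' X) = 1"
    by (rule deriv_unique_on[OF hf _ \<open>open I\<close> th]) (use fI in auto)

  define Kb where "Kb = (\<lambda>i k. \<Sum>j<n. embed_at n j (K j) i k)"
  have P'K: "eqon ?S P' (gm ?S P Kb)"
  proof (rule eqon_pointwise)
    fix i k assume ik: "i \<in> ?S" "k \<in> ?S"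
    have "gm ?S P Kb i k = (\<Sum>j<n. tensor_prod n (\<lambda>l. gm ?T (\<rho> l) (if l = j then K j else mid)) i k)"
      unfolding Kb_def gm_sumR P_def
      by (intro sum.cong refl) (simp add: embed_tensor tensor_mult if_distrib)
    also have "\<dots> = P' i k"
      unfolding P'_def
    proof (intro sum.cong refl)
      fix j assume j: "j \<in> {..<n}"
      show "tensor_prod n (\<lambda>l. gm ?T (\<rho> l) (if l = j then K j else mid)) i k
          = tensor_prod n (\<lambda>l. if l = j then D l else \<rho> l) i k"
        unfolding tensor_prod_def
      proof (intro prod.cong refl)
        fix l assume l: "l \<in> {..<n}"
        then have il: "i l \<in> ?T" "k l \<in> ?T" using ik MI_mem by auto
        show "gm ?T (\<rho> l) (if l = j then K j else mid) (i l) (k l) = (if l = j then D l else \<rho> l) (i l) (k l)"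
        proof (cases "l = j")
          case True
          then show ?thesis using rK_lemma[OF conjunct1[OF inv]] l il by (simp add: eqon_def K_def)
        next
          case False
          then show ?thesis using eqon_mid_R il by (simp add: eqon_def)
        qed
      qed
    qed
    finally show "P' i k = gm ?S P Kb i k" by simp
  qed
  define W where "W = (\<Sum>p\<in>?S\<times>?S. (cmod (uu ?S Bt Kb p))\<^sup>2)"
  have one: "1 = (\<Sum>p\<in>?S\<times>?S. uu ?S Bt Kb p * cnj (uu ?S Bt X p))"
  proof -
    have "1 = gt ?S (gm ?S P' X)" using P'X by simp
    also have "\<dots> = gt ?S (gm ?S (gm ?S P Kb) X)" by (rule gt_cong[OF eqon_cong_gm_left[OF P'K]])
    also have "\<dots> = gt ?S (gm ?S P (gm ?S Kb (ct X)))"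
      by (simp add: gm_assoc) (rule gt_cong[OF eqon_cong_gm_right[OF eqon_cong_gm_right[OF eqon_sym[OF Xh]]]])
    also have "\<dots> = (\<Sum>p\<in>?S\<times>?S. uu ?S Bt Kb p * cnj (uu ?S Bt X p))" by (rule form)
    finally show ?thesis .
  qed
  have WV: "1 \<le> W * V"
  proof -
    have "(cmod (1::complex))\<^sup>2 \<le> W * V" unfolding W_def V_def one by (rule cs_sum) simp
    then show ?thesis by simp
  qed
  have W_eq: "W = (\<Sum>j<n. Aa j)"
  proof -
    have ctKb: "ct Kb = (\<lambda>i k. \<Sum>j<n. embed_at n j (ct (K j)) i k)"
      unfolding Kb_def ct_sum by (intro ext sum.cong refl) (simp add: ct_embed)
    have "of_real W = gt ?S (gm ?S P (gm ?S Kb (ct Kb)))" unfolding form W_def by (rule sum_cnj_self[symmetric])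
    also have "\<dots> = (\<Sum>j<n. gt ?T (gm ?T (\<rho> j) (gm ?T (K j) (ct (K j)))))"
      unfolding ctKb unfolding P_def Kb_def by (rule tensor_embed_sum[OF tr1 trK])
    also have "\<dots> = (\<Sum>j<n. of_real (Aa j))" by (intro sum.cong refl) (simp add: KK)
    finally show ?thesis by (metis of_real_eq_iff of_real_sum)
  qed
  have Wle: "W \<le> (\<Sum>j<n. Re (Itil d (rho j) \<theta>))" unfolding W_eq by (intro sum_mono Itil_ge) auto
  have W00: "0 \<le> W" unfolding W_def by (intro sum_nonneg) auto
  have W0: "0 < W" using WV W00 by (cases "W = 0") auto
  have bound: "1 / (\<Sum>j<n. Re (Itil d (rho j) \<theta>)) \<le> V"
  proof -
    have "1 / (\<Sum>j<n. Re (Itil d (rho j) \<theta>)) \<le> 1 / W" using W0 Wle by (intro divide_left_mono) auto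
    also have "\<dots> \<le> V" using WV W0 by (simp add: divide_le_eq mult.commute)
    finally show ?thesis .
  qed
  have ident: "(\<Sum>j<n. Itil d (rho j) \<theta>) =
             (let Hb = (\<lambda>i k. \<Sum>j<n. embed_at n j (Htil d (rho j) \<theta>) i k)
              in ttrace d n (tmult d n (tensor_prod n (\<lambda>j. rho j \<theta>)) (tmult d n Hb Hb)))"
    unfolding Let_def Pfold ttrace_gt tmult_gm Itil_eq P_def Hj_def
    by (rule tensor_embed_sum[OF tr1 trH, unfolded Hj_def, symmetric])
  show "tvar d n (tensor_prod n (\<lambda>j. rho j \<theta>)) Th \<theta> \<in> \<real>
         \<and> (\<forall>j<n. Itil d (rho j) \<theta> \<in> \<real>)
         \<and> Re (tvar d n (tensor_prod n (\<lambda>j. rho j \<theta>)) Th \<theta>)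
             \<ge> 1 / (\<Sum>j<n. Re (Itil d (rho j) \<theta>))
         \<and> (\<Sum>j<n. Itil d (rho j) \<theta>) =
             (let Hb = (\<lambda>i k. \<Sum>j<n. embed_at n j (Htil d (rho j) \<theta>) i k)
              in ttrace d n (tmult d n (tensor_prod n (\<lambda>j. rho j \<theta>)) (tmult d n Hb Hb)))
         \<and> (n = 1 \<longrightarrow> Re (tvar d n (tensor_prod n (\<lambda>j. rho j \<theta>)) Th \<theta>)
                        \<ge> 1 / Re (Itil d (rho 0) \<theta>))
         \<and> ((\<forall>j<n. rho j = rho 0) \<longrightarrow>
              Re (tvar d n (tensor_prod n (\<lambda>j. rho j \<theta>)) Th \<theta>)
                \<ge> 1 / (real n * Re (Itil d (rho 0) \<theta>)))"
  proof (intro conjI impI allI)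
    show "tvar d n (tensor_prod n (\<lambda>j. rho j \<theta>)) Th \<theta> \<in> \<real>" by (simp add: Pfold tvar)
    show "\<And>j. j < n \<Longrightarrow> Itil d (rho j) \<theta> \<in> \<real>" by (rule Itil_real)
    show "1 / (\<Sum>j<n. Re (Itil d (rho j) \<theta>)) \<le> Re (tvar d n (tensor_prod n (\<lambda>j. rho j \<theta>)) Th \<theta>)"
      using bound by (simp add: Pfold tvar)
    show "(\<Sum>j<n. Itil d (rho j) \<theta>) =
             (let Hb = (\<lambda>i k. \<Sum>j<n. embed_at n j (Htil d (rho j) \<theta>) i k)
              in ttrace d n (tmult d n (tensor_prod n (\<lambda>j. rho j \<theta>)) (tmult d n Hb Hb)))" by (rule ident)
    have tvV: "Re (tvar d n (tensor_prod n (\<lambda>j. rho j \<theta>)) Th \<theta>) = V" by (simp add: Pfold tvar)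
    show "n = 1 \<Longrightarrow> 1 / Re (Itil d (rho 0) \<theta>) \<le> Re (tvar d n (tensor_prod n (\<lambda>j. rho j \<theta>)) Th \<theta>)"
      using bound tvV by simp
    assume same: "\<forall>j<n. rho j = rho 0"
    have "(\<Sum>j<n. Re (Itil d (rho j) \<theta>)) = (\<Sum>j<n. Re (Itil d (rho 0) \<theta>))"
    proof (rule sum.cong[OF refl])
      fix j assume "j \<in> {..<n}"
      then have "rho j = rho 0" using same by blast
      then show "Re (Itil d (rho j) \<theta>) = Re (Itil d (rho 0) \<theta>)" by simp
    qed
    then have "(\<Sum>j<n. Re (Itil d (rho j) \<theta>)) = real n * Re (Itil d (rho 0) \<theta>)" by simp
    then show "1 / (real n * Re (Itil d (rho 0) \<theta>)) \<le> Re (tvar d n (tensor_prod n (\<lambda>j. rho j \<theta>)) Th \<theta>)"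
      using bound tvV by simp
  qed
qed


end
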